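(* Assume $d_{min}\ge d_{close}+d_{open}$ (i.e. $W\ge d_{open}$). Let $R$ be a regular run. If Dir is set to open at some moment $\alpha$, then Dir = open over the interval $(\alpha,\alpha+d_{open})$.
   Context: Setting (evolving algebra for the railroad crossing). States are structures over a vocabulary containing: a finite universe Tracks; the reals and ExtendedReals $=\mathbb{R}\cup\{\infty\}$ with standard $<$ and $+$ ($\infty$ largest); a nullary real-valued symbol $\mathrm{CT}$ (current time); positive real constants $d_{close},d_{open},d_{min},d_{max}$ with $d_{close}<d_{min}\le d_{max}$; a unary function TrackStatus from Tracks to $\{\text{empty},\text{coming},\text{incrossing}\}$; a unary function Deadline from Tracks to ExtendedReals; a nullary Dir with values in $\{\text{open},\text{close}\}$; a nullary GateStatus with values in $\{\text{opened},\text{closed}\}$. Put $W=d_{min}-d_{close}$ and $\Delta_{close}=d_{close}+(d_{max}-d_{min})=d_{max}-W$. For a track $x$, $s(x)$ is the condition [$\mathrm{TrackStatus}(x)=\text{empty}$ or $\mathrm{CT}+d_{open}<\mathrm{Deadline}(x)$], and SafeToOpen is $\forall x\in\mathrm{Tracks}\ s(x)$. The program has two modules (agents). Gate: simultaneously OpenGate "if Dir=open then GateStatus:=opened" and CloseGate "if Dir=close then GateStatus:=closed". Controller: simultaneously, for every track $x$, SetDeadline$(x)$ "if TrackStatus$(x)$=coming and Deadline$(x)=\infty$ then Deadline$(x):=\mathrm{CT}+W$", SignalClose$(x)$ "if $\mathrm{CT}=$Deadline$(x)$ then Dir:=close", ClearDeadline$(x)$ "if TrackStatus$(x)$=empty and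 Deadline$(x)<\infty$ then Deadline$(x):=\infty$", together with SignalOpen "if Dir=close and SafeToOpen then Dir:=open". Executing a module means computing all updates it generates in the current state and performing them simultaneously (nothing happens if the update set is inconsistent). A module is enabled at a state if its update set is consistent and contains an update that changes the state. TrackStatus is external (changed only by the environment); Deadline, Dir, GateStatus are internal (changed only by the modules); other symbols are static. Runs: for $t\mapsto R(t)$, $t\in[0,\infty)$, let $\rho(t)$ be the reduct of $R(t)$ without CT. $R$ is a pre-run if all $R(t)$ share a superuniverse, $\mathrm{CT}=t$ in $R(t)$, and for every $\tau>0$ there are $0=t_0<\dots<t_n=\tau$ with $\rho$ constant on each $(t_i,t_{i+1})$. For a term $e$ (free variables fixed), $e_t$ is its value in $R(t)$, $e_{t+}$ (resp. $e_{t-}$, $t>0$) its constant value on some $(t,t+\epsilon)$ (resp. $(t-\epsilon,t)$); likewise $\rho(t\pm)$. $e$ holds over an interval if it holds at each point; $e$ becomes (is set to) $a$ at $t$ if $e_{t-}\ne a=e_t$ or $e_t\neq a=e_{t+}$. A pre-run is a run if (i) whenever $\rho(t+)\neq\rho(t)$, $\rho(t+)$ is the CT-free reduct of the result of executing some modules at $R(t)$ (these agents fire at $t$), with external functions equal in $\rho(t)$ and $\rho(t+)$; (ii) whenever $t>0$ and $\rho(t)\ne\rho(t-)$, they differ only in external functions. An agent is immediate if it fires at every moment it is enabled; bounded if immediate or there is $b>0$ with no interval $(t,t+b)$ over which it is enabled but never fires. Initial states: TrackStatus$(x)$=empty and Deadline$(x)=\infty$ for every track $x$. A regular run is a run $R$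 with $R(0)$ initial such that: (Train Motion) for each track $x$ there is a finite or infinite sequence $0=t_0<t_1<t_2<\cdots$ (the significant moments of $x$) with TrackStatus$(x)$=empty over each $[t_{3i},t_{3i+1})$, =coming over each $[t_{3i+1},t_{3i+2})$ where $d_{min}\le t_{3i+2}-t_{3i+1}\le d_{max}$, =incrossing over each $[t_{3i+2},t_{3i+3})$, and, if the sequence is finite with last element $t_k$, then $3\mid k$ and TrackStatus$(x)$=empty over $[t_k,\infty)$; (Controller Timing) Controller is immediate; (Gate Timing) Gate is bounded, there is no interval $(t,t+d_{close})$ over which Dir=close and GateStatus=opened both hold, and no interval $(t,t+d_{open})$ over which Dir=open and GateStatus=closed both hold. *)

theory Defs
  imports Main "HOL.Real"
begin

datatype tstatus = Empty | Coming | Incrossing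
datatype dirv = DOpen | DClose
datatype gatev = Opened | Closed

datatype xreal = Fin real | PInf

fun xless :: "xreal \<Rightarrow> xreal \<Rightarrow> bool" where
  "xless (Fin a) (Fin b) = (a < b)"
| "xless (Fin a) PInf = True"
| "xless PInf _ = False"

text \<open>CT-free part of a state (the reduct rho(t)); CT is the time t itself.
  The finite universe Tracks is the finite type 't.\<close>
record 't rstate =
  TrackStatus :: "'t \<Rightarrow> tstatus"
  Deadline :: "'t \<Rightarrow> xreal"
  Dir :: dirv
  GateStatus :: gatev

datatype 't loc = LDeadline 't | LDir | LGate
datatype val = VDL xreal | VDir dirv | VGate gatev

type_synonym 't upd = "'t loc \<times> val"

fun val_at :: "'t loc \<Rightarrow> 't rstate \<Rightarrow> val" where
  "val_at (LDeadline x) s = VDL (Deadline s x)"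
| "val_at LDir s = VDir (Dir s)"
| "val_at LGate s = VGate (GateStatus s)"

fun getDL :: "val \<Rightarrow> xreal" where "getDL (VDL v) = v" | "getDL _ = PInf"
fun getDir :: "val \<Rightarrow> dirv" where "getDir (VDir v) = v" | "getDir _ = DOpen"
fun getGate :: "val \<Rightarrow> gatev" where "getGate (VGate v) = v" | "getGate _ = Opened"

definition consistent :: "'t upd set \<Rightarrow> bool" where
  "consistent U \<longleftrightarrow> (\<forall>l v v'. (l, v) \<in> U \<longrightarrow> (l, v') \<in> U \<longrightarrow> v = v')"

definition new_val :: "'t upd set \<Rightarrow> 't rstate \<Rightarrow> 't loc \<Rightarrow> val" where
  "new_val U s l = (if \<exists>v. (l, v) \<in> U then (THE v. (l, v) \<in> U) else val_at l s)"

definition apply_upds :: "'t upd set \<Rightarrow> 't rstate \<Rightarrow> 't rstate" where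
  "apply_upds U s = \<lparr> TrackStatus = TrackStatus s,
       Deadline = (\<lambda>x. getDL (new_val U s (LDeadline x))),
       Dir = getDir (new_val U s LDir),
       GateStatus = getGate (new_val U s LGate) \<rparr>"

definition fire_upds :: "'t upd set \<Rightarrow> 't rstate \<Rightarrow> 't rstate" where
  "fire_upds U s = (if consistent U then apply_upds U s else s)"

datatype agent = Gate | Controller

text \<open>Parameters: dc = d_close, dop = d_open, dmin = d_min (d_max is not used by the program).
  t is the current value of CT.\<close>

definition SafeToOpen :: "real \<Rightarrow> real \<Rightarrow> 't rstate \<Rightarrow> bool" where
  "SafeToOpen dop t s \<longleftrightarrow> (\<forall>x. TrackStatus s x = Empty \<or> xless (Fin (t + dop)) (Deadline s x))"

definition gate_upds :: "'t rstate \<Rightarrow> 't upd set" where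
  "gate_upds s =
     (if Dir s = DOpen then {(LGate, VGate Opened)} else {})
   \<union> (if Dir s = DClose then {(LGate, VGate Closed)} else {})"

definition controller_upds :: "real \<Rightarrow> real \<Rightarrow> real \<Rightarrow> real \<Rightarrow> 't rstate \<Rightarrow> 't upd set" where
  "controller_upds dc dop dmin t s =
     {(LDeadline x, VDL (Fin (t + (dmin - dc)))) | x.
         TrackStatus s x = Coming \<and> Deadline s x = PInf}
   \<union> {(LDir, VDir DClose) | x. Fin t = Deadline s x}
   \<union> {(LDeadline x, VDL PInf) | x. TrackStatus s x = Empty \<and> xless (Deadline s x) PInf}
   \<union> (if Dir s = DClose \<and> SafeToOpen dop t s then {(LDir, VDir DOpen)} else {})"

definition agent_upds :: "real \<Rightarrow> real \<Rightarrow> real \<Rightarrow> agent \<Rightarrow> real \<Rightarrow> 't rstate \<Rightarrow> 't upd set" where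
  "agent_upds dc dop dmin X t s =
     (case X of Gate \<Rightarrow> gate_upds s | Controller \<Rightarrow> controller_upds dc dop dmin t s)"

definition exec_agents :: "real \<Rightarrow> real \<Rightarrow> real \<Rightarrow> agent set \<Rightarrow> real \<Rightarrow> 't rstate \<Rightarrow> 't rstate" where
  "exec_agents dc dop dmin A t s = fire_upds (\<Union>X\<in>A. agent_upds dc dop dmin X t s) s"

definition enabled :: "real \<Rightarrow> real \<Rightarrow> real \<Rightarrow> agent \<Rightarrow> real \<Rightarrow> 't rstate \<Rightarrow> bool" where
  "enabled dc dop dmin X t s \<longleftrightarrow>
     consistent (agent_upds dc dop dmin X t s) \<and>
     (\<exists>(l, v) \<in> agent_upds dc dop dmin X t s. val_at l s \<noteq> v)"

text \<open>A run is given by rho :: real => 't rstate (only t >= 0 matters); R(t) is rho(t)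
  together with CT = t.\<close>

definition pre_run :: "(real \<Rightarrow> 't rstate) \<Rightarrow> bool" where
  "pre_run \<rho> \<longleftrightarrow> (\<forall>\<tau>>0. \<exists>(n::nat) (ts::nat \<Rightarrow> real).
      ts 0 = 0 \<and> ts n = \<tau> \<and> (\<forall>i<n. ts i < ts (Suc i)) \<and>
      (\<forall>i<n. \<forall>u\<in>{ts i<..<ts (Suc i)}. \<forall>v\<in>{ts i<..<ts (Suc i)}. \<rho> u = \<rho> v))"

definition right_val :: "(real \<Rightarrow> 'a) \<Rightarrow> real \<Rightarrow> 'a" where
  "right_val f t = (THE a. \<exists>\<epsilon>>0. \<forall>u\<in>{t<..<t+\<epsilon>}. f u = a)"

definition left_val :: "(real \<Rightarrow> 'a) \<Rightarrow> real \<Rightarrow> 'a" where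
  "left_val f t = (THE a. \<exists>\<epsilon>>0. \<forall>u\<in>{t-\<epsilon><..<t}. f u = a)"

definition fires :: "real \<Rightarrow> real \<Rightarrow> real \<Rightarrow> (real \<Rightarrow> 't rstate) \<Rightarrow> agent \<Rightarrow> real \<Rightarrow> bool" where
  "fires dc dop dmin \<rho> X t \<longleftrightarrow> right_val \<rho> t \<noteq> \<rho> t \<and>
     (\<exists>A. X \<in> A \<and> right_val \<rho> t = exec_agents dc dop dmin A t (\<rho> t))"

definition is_run :: "real \<Rightarrow> real \<Rightarrow> real \<Rightarrow> (real \<Rightarrow> 't rstate) \<Rightarrow> bool" where
  "is_run dc dop dmin \<rho> \<longleftrightarrow> pre_run \<rho> \<and>
     (\<forall>t\<ge>0. right_val \<rho> t \<noteq> \<rho> t \<longrightarrow>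
        (\<exists>A. right_val \<rho> t = exec_agents dc dop dmin A t (\<rho> t)) \<and>
        TrackStatus (right_val \<rho> t) = TrackStatus (\<rho> t)) \<and>
     (\<forall>t>0. \<rho> t \<noteq> left_val \<rho> t \<longrightarrow>
        Deadline (\<rho> t) = Deadline (left_val \<rho> t) \<and>
        Dir (\<rho> t) = Dir (left_val \<rho> t) \<and>
        GateStatus (\<rho> t) = GateStatus (left_val \<rho> t))"

definition immediate :: "real \<Rightarrow> real \<Rightarrow> real \<Rightarrow> (real \<Rightarrow> 't rstate) \<Rightarrow> agent \<Rightarrow> bool" where
  "immediate dc dop dmin \<rho> X \<longleftrightarrow>
     (\<forall>t\<ge>0. enabled dc dop dmin X t (\<rho> t) \<longrightarrow> fires dc dop dmin \<rho> X t)"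

definition bounded_agent :: "real \<Rightarrow> real \<Rightarrow> real \<Rightarrow> (real \<Rightarrow> 't rstate) \<Rightarrow> agent \<Rightarrow> bool" where
  "bounded_agent dc dop dmin \<rho> X \<longleftrightarrow> immediate dc dop dmin \<rho> X \<or>
     (\<exists>b>0. \<not> (\<exists>t\<ge>0. (\<forall>u\<in>{t<..<t+b}. enabled dc dop dmin X u (\<rho> u)) \<and>
                       (\<forall>u\<in>{t<..<t+b}. \<not> fires dc dop dmin \<rho> X u)))"

definition initial_state :: "'t rstate \<Rightarrow> bool" where
  "initial_state s \<longleftrightarrow> (\<forall>x. TrackStatus s x = Empty \<and> Deadline s x = PInf)"

text \<open>The three phases of the i-th passage of a train on track x.\<close>
definition phase_ok :: "real \<Rightarrow> real \<Rightarrow> (real \<Rightarrow> 't rstate) \<Rightarrow> 't \<Rightarrow> (nat \<Rightarrow> real) \<Rightarrow> nat \<Rightarrow> bool" where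
  "phase_ok dmin dmax \<rho> x s i \<longleftrightarrow>
     (\<forall>u\<in>{s (3*i)..<s (3*i+1)}. TrackStatus (\<rho> u) x = Empty) \<and>
     (\<forall>u\<in>{s (3*i+1)..<s (3*i+2)}. TrackStatus (\<rho> u) x = Coming) \<and>
     dmin \<le> s (3*i+2) - s (3*i+1) \<and> s (3*i+2) - s (3*i+1) \<le> dmax \<and>
     (\<forall>u\<in>{s (3*i+2)..<s (3*i+3)}. TrackStatus (\<rho> u) x = Incrossing)"

definition train_motion :: "real \<Rightarrow> real \<Rightarrow> (real \<Rightarrow> 't rstate) \<Rightarrow> 't \<Rightarrow> bool" where
  "train_motion dmin dmax \<rho> x \<longleftrightarrow> (\<exists>s::nat \<Rightarrow> real. s 0 = 0 \<and>
     ((\<exists>k. 3 dvd k \<and> (\<forall>i<k. s i < s (Suc i)) \<and>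
           (\<forall>i. 3*i+3 \<le> k \<longrightarrow> phase_ok dmin dmax \<rho> x s i) \<and>
           (\<forall>u\<ge>s k. TrackStatus (\<rho> u) x = Empty))
      \<or> ((\<forall>i. s i < s (Suc i)) \<and> (\<forall>i. phase_ok dmin dmax \<rho> x s i))))"

definition regular_run :: "real \<Rightarrow> real \<Rightarrow> real \<Rightarrow> real \<Rightarrow> (real \<Rightarrow> 't rstate) \<Rightarrow> bool" where
  "regular_run dc dop dmin dmax \<rho> \<longleftrightarrow>
     is_run dc dop dmin \<rho> \<and> initial_state (\<rho> 0) \<and>
     (\<forall>x. train_motion dmin dmax \<rho> x) \<and>
     immediate dc dop dmin \<rho> Controller \<and>
     bounded_agent dc dop dmin \<rho> Gate \<and>
     \<not> (\<exists>t\<ge>0. \<forall>u\<in>{t<..<t+dc}. Dir (\<rho> u) = DClose \<and> GateStatus (\<rho> u) = Opened) \<and>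
     \<not> (\<exists>t\<ge>0. \<forall>u\<in>{t<..<t+dop}. Dir (\<rho> u) = DOpen \<and> GateStatus (\<rho> u) = Closed)"

text \<open>Term e (here a function of the CT-free state) becomes / is set to a at t.\<close>
definition set_to_at :: "(real \<Rightarrow> 't rstate) \<Rightarrow> ('t rstate \<Rightarrow> 'b) \<Rightarrow> 'b \<Rightarrow> real \<Rightarrow> bool" where
  "set_to_at \<rho> e a t \<longleftrightarrow>
     (t > 0 \<and> e (left_val \<rho> t) \<noteq> a \<and> e (\<rho> t) = a) \<or>
     (e (\<rho> t) \<noteq> a \<and> e (right_val \<rho> t) = a)"

end

theory Submission
  imports Defs
begin

definition good :: "real \<Rightarrow> 't rstate \<Rightarrow> bool" where
  "good c s \<longleftrightarrow> Dir s = DOpen \<and> (\<forall>x. Deadline s x = PInf \<or> (\<exists>r. Deadline s x = Fin r \<and> c \<le> r))"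

lemma mid1: "(a::real) \<le> t \<Longrightarrow> t < b \<Longrightarrow> a < t + (b - t)/2" by (simp add: field_simps)
lemma mid2: "(a::real) \<le> t \<Longrightarrow> t < b \<Longrightarrow> t + (b - t)/2 < b" by (simp add: field_simps)
lemma mid3: "(a::real) < t \<Longrightarrow> t \<le> b \<Longrightarrow> a < t - (t - a)/2" by (simp add: field_simps)
lemma mid4: "(a::real) < t \<Longrightarrow> t \<le> b \<Longrightarrow> t - (t - a)/2 < b" by (simp add: field_simps)
lemma mid5: "(a::real) < b \<Longrightarrow> a < (a + b)/2" by (simp add: field_simps)
lemma mid6: "(a::real) < b \<Longrightarrow> (a + b)/2 < b" by (simp add: field_simps)

lemma part_right:
  "(\<forall>i<n. ts i < ts (Suc i)) \<Longrightarrow> ts 0 \<le> t \<Longrightarrow> t < ts n \<Longrightarrow> \<exists>i<n. ts i \<le> t \<and> t < ts (Suc i)"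
  for ts :: "nat \<Rightarrow> real"
proof (induction n)
  case 0 then show ?case by simp
next
  case (Suc n)
  show ?case
  proof (cases "t < ts n")
    case True
    with Suc show ?thesis by (metis less_Suc_eq)
  next
    case False
    with Suc show ?thesis by (intro exI[of _ n]) auto
  qed
qed

lemma part_left:
  "(\<forall>i<n. ts i < ts (Suc i)) \<Longrightarrow> ts 0 < t \<Longrightarrow> t \<le> ts n \<Longrightarrow> \<exists>i<n. ts i < t \<and> t \<le> ts (Suc i)"
  for ts :: "nat \<Rightarrow> real"
proof (induction n)
  case 0 then show ?case by simp
next
  case (Suc n)
  show ?case
  proof (cases "t \<le> ts n")
    case True
    with Suc show ?thesis by (metis less_Suc_eq)
  next
    case False
    with Suc show ?thesis by (intro exI[of _ n]) auto
  qed
qed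

lemma right_val_eq:
  assumes "e > 0" "\<forall>u\<in>{t<..<t+e}. f u = c"
  shows "right_val f t = c"
  unfolding right_val_def
proof (rule the_equality)
  show "\<exists>\<epsilon>>0. \<forall>u\<in>{t<..<t + \<epsilon>}. f u = c" using assms by blast
next
  fix a assume "\<exists>\<epsilon>>0. \<forall>u\<in>{t<..<t + \<epsilon>}. f u = a"
  then obtain e' where e': "e' > 0" "\<forall>u\<in>{t<..<t + e'}. f u = a" by blast
  define u where "u = t + min e e' / 2"
  have "u \<in> {t<..<t+e}" "u \<in> {t<..<t+e'}" using assms(1) e'(1) by (auto simp: u_def)
  then show "a = c" using assms e' by metis
qed

lemma left_val_eq:
  assumes "e > 0" "\<forall>u\<in>{t-e<..<t}. f u = c"
  shows "left_val f t = c"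
  unfolding left_val_def
proof (rule the_equality)
  show "\<exists>\<epsilon>>0. \<forall>u\<in>{t-\<epsilon><..<t}. f u = c" using assms by blast
next
  fix a assume "\<exists>\<epsilon>>0. \<forall>u\<in>{t-\<epsilon><..<t}. f u = a"
  then obtain e' where e': "e' > 0" "\<forall>u\<in>{t-e'<..<t}. f u = a" by blast
  define u where "u = t - min e e' / 2"
  have "u \<in> {t-e<..<t}" "u \<in> {t-e'<..<t}" using assms(1) e'(1) by (auto simp: u_def)
  then show "a = c" using assms e' by metis
qed

lemma pre_run_right:
  assumes "pre_run \<rho>" "t \<ge> 0"
  shows "\<exists>e>0. \<forall>u\<in>{t<..<t+e}. \<rho> u = right_val \<rho> t"
proof -
  obtain n ts where ts: "ts 0 = 0" "ts n = t + 1" "\<forall>i<n. ts i < ts (Suc i)"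
    "\<forall>i<n. \<forall>u\<in>{ts i<..<ts (Suc i)}. \<forall>v\<in>{ts i<..<ts (Suc i)}. \<rho> u = \<rho> v"
  proof -
    have "t + 1 > 0" using assms(2) by simp
    from assms(1)[unfolded pre_run_def, rule_format, OF this] show ?thesis using that by blast
  qed
  obtain i where i: "i < n" "ts i \<le> t" "t < ts (Suc i)"
    using part_right[of n ts t] ts(1,2,3) assms(2) by auto
  define e where "e = ts (Suc i) - t"
  have e: "e > 0" using i by (simp add: e_def)
  have c: "\<forall>u\<in>{t<..<t+e}. \<rho> u = \<rho> (t + e/2)"
  proof
    fix u assume "u \<in> {t<..<t+e}"
    moreover have "ts i < t + e/2" unfolding e_def using i(2,3) by (rule mid1)
    moreover have "t + e/2 < ts (Suc i)" unfolding e_def using i(2,3) by (rule mid2)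
    ultimately have "u \<in> {ts i<..<ts (Suc i)}" "t + e/2 \<in> {ts i<..<ts (Suc i)}"
      using i(2) unfolding e_def greaterThanLessThan_iff by auto
    moreover have H: "\<And>u v. u \<in> {ts i<..<ts (Suc i)} \<Longrightarrow> v \<in> {ts i<..<ts (Suc i)} \<Longrightarrow> \<rho> u = \<rho> v"
      using ts(4) i(1) by blast
    ultimately show "\<rho> u = \<rho> (t + e/2)" by blast
  qed
  have rv: "right_val \<rho> t = \<rho> (t + e/2)" by (rule right_val_eq[OF e c])
  show ?thesis
  proof (intro exI[of _ e] conjI ballI)
    show "e > 0" by (rule e)
  next
    fix u assume u: "u \<in> {t<..<t+e}"
    show "\<rho> u = right_val \<rho> t" unfolding rv using c u by (rule bspec)
  qed
qed

lemma pre_run_left: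
  assumes "pre_run \<rho>" "t > 0"
  shows "\<exists>e>0. \<forall>u\<in>{t-e<..<t}. \<rho> u = left_val \<rho> t"
proof -
  obtain n ts where ts: "ts 0 = 0" "ts n = t" "\<forall>i<n. ts i < ts (Suc i)"
    "\<forall>i<n. \<forall>u\<in>{ts i<..<ts (Suc i)}. \<forall>v\<in>{ts i<..<ts (Suc i)}. \<rho> u = \<rho> v"
  proof -
    from assms(1)[unfolded pre_run_def, rule_format, OF assms(2)] show ?thesis using that by blast
  qed
  obtain i where i: "i < n" "ts i < t" "t \<le> ts (Suc i)"
    using part_left[of n ts t] ts(1,2,3) assms(2) by auto
  define e where "e = t - ts i"
  have e: "e > 0" using i by (simp add: e_def)
  have c: "\<forall>u\<in>{t-e<..<t}. \<rho> u = \<rho> (t - e/2)"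
  proof
    fix u assume "u \<in> {t-e<..<t}"
    moreover have "ts i < t - e/2" unfolding e_def using i(2,3) by (rule mid3)
    moreover have "t - e/2 < ts (Suc i)" unfolding e_def using i(2,3) by (rule mid4)
    ultimately have "u \<in> {ts i<..<ts (Suc i)}" "t - e/2 \<in> {ts i<..<ts (Suc i)}"
      using i(3) unfolding e_def greaterThanLessThan_iff by auto
    moreover have H: "\<And>u v. u \<in> {ts i<..<ts (Suc i)} \<Longrightarrow> v \<in> {ts i<..<ts (Suc i)} \<Longrightarrow> \<rho> u = \<rho> v"
      using ts(4) i(1) by blast
    ultimately show "\<rho> u = \<rho> (t - e/2)" by blast
  qed
  have rv: "left_val \<rho> t = \<rho> (t - e/2)" by (rule left_val_eq[OF e c])
  show ?thesis
  proof (intro exI[of _ e] conjI ballI)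
    show "e > 0" by (rule e)
  next
    fix u assume u: "u \<in> {t-e<..<t}"
    show "\<rho> u = left_val \<rho> t" unfolding rv using c u by (rule bspec)
  qed
qed

lemma U_mem:
  assumes "(l, v) \<in> (\<Union>X\<in>A. agent_upds dc dop dmin X t s)"
  shows "l = LGate \<or> (l = LDir \<and> v = VDir DClose \<and> (\<exists>x. Fin t = Deadline s x))
    \<or> (l = LDir \<and> v = VDir DOpen \<and> Dir s = DClose \<and> SafeToOpen dop t s \<and> Controller \<in> A)
    \<or> (\<exists>x. l = LDeadline x \<and> (v = VDL (Fin (t + (dmin - dc))) \<or> v = VDL PInf))"
proof -
  obtain X where X: "X \<in> A" "(l, v) \<in> agent_upds dc dop dmin X t s" using assms by blast
  show ?thesis
  proof (cases X)
    case Gate then show ?thesis using X by (auto simp: agent_upds_def gate_upds_def split: if_splits)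
  next
    case Controller
    with X have "(l, v) \<in> controller_upds dc dop dmin t s" by (simp add: agent_upds_def)
    then show ?thesis unfolding controller_upds_def
    proof (elim UnE)
      assume "(l, v) \<in> (if Dir s = DClose \<and> SafeToOpen dop t s then {(LDir, VDir DOpen)} else {})"
      then show ?thesis using X(1) Controller by (simp split: if_splits)
    qed blast+
  qed
qed

lemma new_val_in: "consistent U \<Longrightarrow> (l, v) \<in> U \<Longrightarrow> new_val U s l = v"
proof -
  assume c: "consistent U" and v: "(l, v) \<in> U"
  have "(THE v. (l, v) \<in> U) = v"
  proof (rule the_equality)
    show "(l, v) \<in> U" by (rule v)
    fix w assume "(l, w) \<in> U"
    then show "w = v" using c v unfolding consistent_def by blast
  qed
  moreover have "\<exists>w. (l, w) \<in> U" using v by blast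
  ultimately show ?thesis unfolding new_val_def by simp
qed

lemma new_val_out: assumes h: "\<not> (\<exists>v. (l, v) \<in> U)" shows "new_val U s l = val_at l s"
  unfolding new_val_def using h by (simp only: if_False)

lemma pres_lemma:
  assumes "good c s" "t < c" "c \<le> t + (dmin - dc)"
  shows "good c (exec_agents dc dop dmin A t s)"
proof (cases "consistent (\<Union>X\<in>A. agent_upds dc dop dmin X t s)")
  case False then show ?thesis using assms(1) by (simp add: exec_agents_def fire_upds_def)
next
  case True
  let ?U = "\<Union>X\<in>A. agent_upds dc dop dmin X t s"
  have noDir: "\<not> (\<exists>v. (LDir, v) \<in> ?U)"
  proof
    assume "\<exists>v. (LDir, v) \<in> ?U"
    then obtain v where "(LDir, v) \<in> ?U" by blast
    from U_mem[OF this] have "\<exists>x. Fin t = Deadline s x" using assms(1) unfolding good_def by auto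
    then obtain x where x: "Fin t = Deadline s x" by blast
    from assms(1) have "Deadline s x = PInf \<or> (\<exists>r. Deadline s x = Fin r \<and> c \<le> r)" unfolding good_def by blast
    then show False using x assms(2) by auto
  qed
  have d: "Dir (apply_upds ?U s) = DOpen"
    using new_val_out[OF noDir, of s] assms(1) by (simp add: apply_upds_def good_def)
  have dl: "Deadline (apply_upds ?U s) x = PInf \<or> (\<exists>r. Deadline (apply_upds ?U s) x = Fin r \<and> c \<le> r)" for x
  proof (cases "\<exists>v. (LDeadline x, v) \<in> ?U")
    case True
    then obtain v where v: "(LDeadline x, v) \<in> ?U" by blast
    have "new_val ?U s (LDeadline x) = v" using new_val_in[OF \<open>consistent ?U\<close> v] .
    moreover from U_mem[OF v] have "v = VDL (Fin (t + (dmin - dc))) \<or> v = VDL PInf" by auto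
    ultimately show ?thesis using assms by (auto simp: apply_upds_def)
  next
    case False
    then show ?thesis using new_val_out[OF False, of s] assms(1) by (simp add: apply_upds_def good_def)
  qed
  show ?thesis using True d dl by (simp add: exec_agents_def fire_upds_def good_def)
qed


lemma start_lemma:
  assumes "Dir s = DClose" "Dir (exec_agents dc dop dmin A t s) = DOpen" "dop \<le> dmin - dc"
  shows "good (t + dop) (exec_agents dc dop dmin A t s)"
proof -
  let ?U = "\<Union>X\<in>A. agent_upds dc dop dmin X t s"
  have cons: "consistent ?U"
  proof (rule ccontr)
    assume "\<not> consistent ?U"
    then have "exec_agents dc dop dmin A t s = s" by (simp add: exec_agents_def fire_upds_def)
    with assms(1,2) show False by simp
  qed
  have ex: "exec_agents dc dop dmin A t s = apply_upds ?U s"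
    using cons by (simp add: exec_agents_def fire_upds_def)
  have "\<exists>v. (LDir, v) \<in> ?U"
  proof (rule ccontr)
    assume h: "\<not> (\<exists>v. (LDir, v) \<in> ?U)"
    then have "Dir (apply_upds ?U s) = DClose"
      using new_val_out[OF h, of s] assms(1) by (simp add: apply_upds_def)
    with assms(2) ex show False by simp
  qed
  then obtain v where v: "(LDir, v) \<in> ?U" by blast
  have nv: "new_val ?U s LDir = v" by (rule new_val_in[OF cons v])
  have "getDir v = DOpen" using assms(2) ex nv by (simp add: apply_upds_def)
  then have "v \<noteq> VDir DClose" by auto
  with U_mem[OF v] have sto: "SafeToOpen dop t s" and ctrl: "Controller \<in> A" by auto
  have dl: "Deadline (apply_upds ?U s) x = PInf \<or> (\<exists>r. Deadline (apply_upds ?U s) x = Fin r \<and> t + dop \<le> r)" for x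
  proof (cases "\<exists>w. (LDeadline x, w) \<in> ?U")
    case True
    then obtain w where w: "(LDeadline x, w) \<in> ?U" by blast
    have "new_val ?U s (LDeadline x) = w" by (rule new_val_in[OF cons w])
    moreover from U_mem[OF w] have "w = VDL (Fin (t + (dmin - dc))) \<or> w = VDL PInf" by auto
    ultimately show ?thesis using assms(3) by (auto simp: apply_upds_def)
  next
    case False
    have D: "Deadline (apply_upds ?U s) x = Deadline s x"
      using new_val_out[OF False, of s] by (simp add: apply_upds_def)
    have "TrackStatus s x = Empty \<or> xless (Fin (t + dop)) (Deadline s x)"
      using sto unfolding SafeToOpen_def by blast
    then show ?thesis
    proof
      assume E: "TrackStatus s x = Empty"
      show ?thesis
      proof (cases "Deadline s x")
        case (Fin r)
        have "(LDeadline x, VDL PInf) \<in> controller_upds dc dop dmin t s"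
          unfolding controller_upds_def using E Fin by auto
        moreover have "agent_upds dc dop dmin Controller t s = controller_upds dc dop dmin t s"
          by (simp add: agent_upds_def)
        ultimately have "(LDeadline x, VDL PInf) \<in> ?U" using ctrl by blast
        with False show ?thesis by blast
      next
        case PInf
        then show ?thesis using D by simp
      qed
    next
      assume "xless (Fin (t + dop)) (Deadline s x)"
      then show ?thesis using D by (cases "Deadline s x") auto
    qed
  qed
  show ?thesis unfolding good_def using ex assms(2) dl by simp
qed

theorem mainTheorem13:
  fixes \<rho> :: "real \<Rightarrow> ('t::finite) rstate"
    and dc dop dmin dmax \<alpha> :: real
  assumes "0 < dc" and "0 < dop" and "0 < dmin" and "0 < dmax"
    and "dc < dmin" and "dmin \<le> dmax"
    and "dmin \<ge> dc + dop"
    and "regular_run dc dop dmin dmax \<rho>"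
    and "\<alpha> \<ge> 0"
    and "set_to_at \<rho> Dir DOpen \<alpha>"
  shows "\<forall>u\<in>{\<alpha><..<\<alpha> + dop}. Dir (\<rho> u) = DOpen"
proof -
  define c where "c = \<alpha> + dop"
  have run: "is_run dc dop dmin \<rho>" using assms(8) by (simp add: regular_run_def)
  then have pr: "pre_run \<rho>" by (simp add: is_run_def)
  have rstep: "\<exists>A. right_val \<rho> t = exec_agents dc dop dmin A t (\<rho> t)"
    if "t \<ge> 0" "right_val \<rho> t \<noteq> \<rho> t" for t
    using run that unfolding is_run_def by blast
  have lstep: "Deadline (\<rho> t) = Deadline (left_val \<rho> t) \<and> Dir (\<rho> t) = Dir (left_val \<rho> t)"
    if "t > 0" for t
  proof (cases "\<rho> t = left_val \<rho> t")
    case True then show ?thesis by simp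
  next
    case False then show ?thesis using run that unfolding is_run_def by blast
  qed
  have goodL: "good c (\<rho> t)" if "t > 0" "good c (left_val \<rho> t)" for t
    using lstep[OF that(1)] that(2) unfolding good_def by simp
  have dd: "dop \<le> dmin - dc" using assms(7) by simp
  have start: "good c (right_val \<rho> \<alpha>)"
    using assms(10) unfolding set_to_at_def
  proof
    assume "0 < \<alpha> \<and> Dir (left_val \<rho> \<alpha>) \<noteq> DOpen \<and> Dir (\<rho> \<alpha>) = DOpen"
    with lstep show ?thesis by auto
  next
    assume h: "Dir (\<rho> \<alpha>) \<noteq> DOpen \<and> Dir (right_val \<rho> \<alpha>) = DOpen"
    then have "right_val \<rho> \<alpha> \<noteq> \<rho> \<alpha>" by auto
    then obtain A where A: "right_val \<rho> \<alpha> = exec_agents dc dop dmin A \<alpha> (\<rho> \<alpha>)"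
      using rstep assms(9) by blast
    have "Dir (\<rho> \<alpha>) = DClose" using h by (cases "Dir (\<rho> \<alpha>)") auto
    from start_lemma[OF this _ dd, of A] h A show ?thesis unfolding c_def by simp
  qed
  have pres: "good c (right_val \<rho> t)" if h1: "\<alpha> < t" and h2: "t < c" and h3: "good c (\<rho> t)" for t
  proof (cases "right_val \<rho> t = \<rho> t")
    case True then show ?thesis using h3 by simp
  next
    case False
    have t0: "t \<ge> 0" using h1 assms(9) by simp
    obtain A where A: "right_val \<rho> t = exec_agents dc dop dmin A t (\<rho> t)"
      using rstep[OF t0 False] by blast
    have "c \<le> t + (dmin - dc)" using h1 dd unfolding c_def by simp
    from pres_lemma[OF h3 h2 this, of dop A] A show ?thesis by simp
  qed
  have allgood: "\<forall>u\<in>{\<alpha><..<c}. good c (\<rho> u)"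
  proof (rule ccontr)
    assume "\<not> (\<forall>u\<in>{\<alpha><..<c}. good c (\<rho> u))"
    then obtain u0 where u0: "\<alpha> < u0" "u0 < c" "\<not> good c (\<rho> u0)" by auto
    define S where "S = {u. \<alpha> < u \<and> u < c \<and> \<not> good c (\<rho> u)}"
    define t0 where "t0 = Inf S"
    have ne: "S \<noteq> {}" using u0 unfolding S_def by blast
    have bdd: "bdd_below S" unfolding S_def bdd_below_def by (rule exI[of _ \<alpha>]) auto
    have lower: "t0 \<le> s" if "s \<in> S" for s
      unfolding t0_def using bdd that by (rule cInf_lower[rotated])
    have ge: "\<alpha> \<le> t0" unfolding t0_def using ne by (rule cInf_greatest) (auto simp: S_def)
    have lt: "t0 < c" using lower[of u0] u0 unfolding S_def by auto
    have key: "t0 \<notin> S \<and> (\<exists>e>0. \<forall>u\<in>{t0<..<t0+e}. good c (\<rho> u))"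
    proof (cases "t0 = \<alpha>")
      case True
      obtain e where e: "e > 0" "\<forall>u\<in>{\<alpha><..<\<alpha>+e}. \<rho> u = right_val \<rho> \<alpha>"
        using pre_run_right[OF pr assms(9)] by blast
      have "\<forall>u\<in>{t0<..<t0+e}. good c (\<rho> u)"
      proof
        fix u assume "u \<in> {t0<..<t0+e}"
        then have "\<rho> u = right_val \<rho> \<alpha>" using e(2) True by (intro bspec[OF e(2)]) simp
        then show "good c (\<rho> u)" using start by simp
      qed
      moreover have "t0 \<notin> S" using True unfolding S_def by simp
      ultimately show ?thesis using e(1) by blast
    next
      case False
      then have gt: "\<alpha> < t0" using ge by simp
      then have pos: "t0 > 0" using assms(9) by simp
      obtain e1 where e1: "e1 > 0" "\<forall>u\<in>{t0-e1<..<t0}. \<rho> u = left_val \<rho> t0"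
        using pre_run_left[OF pr pos] by blast
      define a where "a = max (t0 - e1) \<alpha>"
      have a: "a < t0" using e1(1) gt unfolding a_def by simp
      define w where "w = (a + t0) / 2"
      have w1: "a < w" unfolding w_def using a by (rule mid5)
      have w2: "w < t0" unfolding w_def using a by (rule mid6)
      have wa: "\<alpha> < w" "t0 - e1 < w" using w1 unfolding a_def by auto
      have "w \<notin> S" using lower[of w] w2 by auto
      then have "good c (\<rho> w)" using wa w2 lt unfolding S_def by auto
      moreover have "\<rho> w = left_val \<rho> t0" using wa(2) w2 by (intro bspec[OF e1(2)]) simp
      ultimately have "good c (left_val \<rho> t0)" by simp
      then have g0: "good c (\<rho> t0)" using goodL pos by blast
      then have "good c (right_val \<rho> t0)" using pres gt lt by blast
      moreover obtain e where e: "e > 0" "\<forall>u\<in>{t0<..<t0+e}. \<rho> u = right_val \<rho> t0"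
        using pre_run_right[OF pr, of t0] pos by auto
      have "\<forall>u\<in>{t0<..<t0+e}. good c (\<rho> u)"
      proof
        fix u assume "u \<in> {t0<..<t0+e}"
        then have "\<rho> u = right_val \<rho> t0" by (rule bspec[OF e(2)])
        then show "good c (\<rho> u)" using calculation by simp
      qed
      moreover have "t0 \<notin> S" using g0 unfolding S_def by simp
      ultimately show ?thesis using e(1) by blast
    qed
    then obtain e where e: "e > 0" "\<forall>u\<in>{t0<..<t0+e}. good c (\<rho> u)" and nS: "t0 \<notin> S" by blast
    have "Inf S < t0 + e" using e(1) unfolding t0_def by simp
    then obtain s where s: "s \<in> S" "s < t0 + e" using cInf_less_iff[OF ne bdd] by blast
    have "t0 < s" using lower[OF s(1)] nS s(1) by (cases "t0 = s") auto
    then have "good c (\<rho> s)" using e(2) s(2) by simp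
    then show False using s(1) unfolding S_def by simp
  qed
  show ?thesis
  proof
    fix u assume "u \<in> {\<alpha><..<\<alpha> + dop}"
    then have "good c (\<rho> u)" using allgood unfolding c_def by blast
    then show "Dir (\<rho> u) = DOpen" unfolding good_def by simp
  qed
qed

end
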